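(* Let $X$ be a rearrangement invariant space on $(0,\infty)$ with the Fatou property such that $L_\infty\hookrightarrow X$ and the Cesàro operator $C$ is bounded on $X$. Suppose also that $X$ satisfies: for every $f\in X$ and every measurable $A\subset(0,\infty)$ with $m(A)<\infty$, $f\chi_A\in X_a$. Then the Cesàro space $CX$ contains a lattice isometric copy of $\ell_\infty$.
   Context: A rearrangement invariant space on $(0,\infty)$ is a Banach space $X\subset L_0(0,\infty)$ with the ideal property ($|f|\le|g|$ a.e., $g\in X$ imply $f\in X$, $\|f\|_X\le\|g\|_X$), containing an a.e. positive function, in which equimeasurable functions have equal norms. Fatou property: $0\le f_n\uparrow f$ a.e., $\sup\|f_n\|_X<\infty$ imply $f\in X$ and $\|f_n\|_X\uparrow\|f\|_X$. $X_a$ is the ideal of order continuous elements ($f\in X_a$ iff $0\le f_n\le|f|$, $f_n\downarrow0$ a.e. imply $\|f_n\|_X\to0$). $m$ is Lebesgue measure. $C(f)(x)=\frac1x\int_0^x|f(t)|\,dt$; $CX=\{f: C(|f|)\in X\}$ with $\|f\|_{CX}=\|C(|f|)\|_X$. A lattice isometric copy of $\ell_\infty$ is the image of a linear isometric lattice-homomorphic embedding of $\ell_\infty$. *)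

theory Defs
  imports "HOL-Analysis.Analysis"
begin

text \<open>Functions on (0,infinity) are represented by real-valued functions on the reals;
  only their values on {0<..} matter, and everything is modulo equality a.e.
  A rearrangement invariant space X is represented by its norm functional
  rho, extended by infinity outside X: X = {f measurable. rho f < infinity}.\<close>

type_synonym rfun = "real \<Rightarrow> real"

abbreviation M0 :: "real measure" where
  "M0 \<equiv> lebesgue_on {0<..}"

definition Mfun :: "rfun set" where
  "Mfun = borel_measurable M0"

definition in_X :: "(rfun \<Rightarrow> ennreal) \<Rightarrow> rfun \<Rightarrow> bool" where
  "in_X \<rho> f \<longleftrightarrow> f \<in> Mfun \<and> \<rho> f < \<infinity>"

definition ri_space :: "(rfun \<Rightarrow> ennreal) \<Rightarrow> bool" where
  "ri_space \<rho> \<longleftrightarrow>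
     (\<forall>f\<in>Mfun. \<forall>g\<in>Mfun. (AE x in M0. \<bar>f x\<bar> \<le> \<bar>g x\<bar>) \<longrightarrow> \<rho> f \<le> \<rho> g)
   \<and> (\<forall>f\<in>Mfun. \<rho> f = 0 \<longleftrightarrow> (AE x in M0. f x = 0))
   \<and> (\<forall>f\<in>Mfun. \<forall>c::real. \<rho> (\<lambda>x. c * f x) = ennreal \<bar>c\<bar> * \<rho> f)
   \<and> (\<forall>f\<in>Mfun. \<forall>g\<in>Mfun. \<rho> (\<lambda>x. f x + g x) \<le> \<rho> f + \<rho> g)
   \<and> (\<forall>F::nat \<Rightarrow> rfun. (\<forall>n. in_X \<rho> (F n)) \<and>
        (\<forall>e>0. \<exists>N. \<forall>m\<ge>N. \<forall>n\<ge>N. \<rho> (\<lambda>x. F m x - F n x) < ennreal e)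
        \<longrightarrow> (\<exists>f. in_X \<rho> f \<and> (\<lambda>n. \<rho> (\<lambda>x. F n x - f x)) \<longlonglongrightarrow> 0))
   \<and> (\<exists>f. in_X \<rho> f \<and> (AE x in M0. f x > 0))
   \<and> (\<forall>f\<in>Mfun. \<forall>g\<in>Mfun.
        (\<forall>s::real. emeasure M0 {x\<in>{0<..}. s < \<bar>f x\<bar>} = emeasure M0 {x\<in>{0<..}. s < \<bar>g x\<bar>})
        \<longrightarrow> \<rho> f = \<rho> g)"

definition fatou_property :: "(rfun \<Rightarrow> ennreal) \<Rightarrow> bool" where
  "fatou_property \<rho> \<longleftrightarrow>
     (\<forall>F::nat \<Rightarrow> rfun. \<forall>f. (\<forall>n. F n \<in> Mfun) \<and> f \<in> Mfun \<and>
        (AE x in M0. \<forall>n. 0 \<le> F n x \<and> F n x \<le> F (Suc n) x) \<and>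
        (AE x in M0. (\<lambda>n. F n x) \<longlonglongrightarrow> f x)
        \<longrightarrow> \<rho> f = (SUP n. \<rho> (F n)))"

definition Linf_embeds :: "(rfun \<Rightarrow> ennreal) \<Rightarrow> bool" where
  "Linf_embeds \<rho> \<longleftrightarrow> (\<forall>f\<in>Mfun. (\<exists>B. AE x in M0. \<bar>f x\<bar> \<le> B) \<longrightarrow> \<rho> f < \<infinity>)"

definition in_Xa :: "(rfun \<Rightarrow> ennreal) \<Rightarrow> rfun \<Rightarrow> bool" where
  "in_Xa \<rho> f \<longleftrightarrow> in_X \<rho> f \<and>
     (\<forall>F::nat \<Rightarrow> rfun. (\<forall>n. F n \<in> Mfun) \<and>
        (AE x in M0. \<forall>n. 0 \<le> F n x \<and> F n x \<le> \<bar>f x\<bar> \<and> F (Suc n) x \<le> F n x) \<and>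
        (AE x in M0. (\<lambda>n. F n x) \<longlonglongrightarrow> 0)
        \<longrightarrow> (\<lambda>n. \<rho> (F n)) \<longlonglongrightarrow> 0)"

definition cesaro_int :: "rfun \<Rightarrow> real \<Rightarrow> ennreal" where
  "cesaro_int f x = (\<integral>\<^sup>+ t. ennreal \<bar>f t\<bar> * indicator {0<..<x} t \<partial>lborel)"

definition cesaro_finite :: "rfun \<Rightarrow> bool" where
  "cesaro_finite f \<longleftrightarrow> (\<forall>x>0. cesaro_int f x < \<infinity>)"

definition cesaro :: "rfun \<Rightarrow> rfun" where
  "cesaro f x = (if x > 0 then (1 / x) * enn2real (cesaro_int f x) else 0)"

definition cesaro_bounded :: "(rfun \<Rightarrow> ennreal) \<Rightarrow> bool" where
  "cesaro_bounded \<rho> \<longleftrightarrow> (\<exists>K::real. \<forall>f. in_X \<rho> f \<longrightarrow>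
       cesaro_finite f \<and> cesaro f \<in> Mfun \<and> \<rho> (cesaro f) \<le> ennreal K * \<rho> f)"

definition cesaro_norm :: "(rfun \<Rightarrow> ennreal) \<Rightarrow> rfun \<Rightarrow> ennreal" where
  "cesaro_norm \<rho> f = (if cesaro_finite f then \<rho> (cesaro f) else \<infinity>)"

definition in_CX :: "(rfun \<Rightarrow> ennreal) \<Rightarrow> rfun \<Rightarrow> bool" where
  "in_CX \<rho> f \<longleftrightarrow> f \<in> Mfun \<and> cesaro_norm \<rho> f < \<infinity>"

definition linf :: "(nat \<Rightarrow> real) set" where
  "linf = {a. bounded (range a)}"

definition contains_lattice_isometric_linf :: "(rfun \<Rightarrow> ennreal) \<Rightarrow> bool" where
  "contains_lattice_isometric_linf \<rho> \<longleftrightarrow>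
    (\<exists>T :: (nat \<Rightarrow> real) \<Rightarrow> rfun. \<forall>a\<in>linf. \<forall>b\<in>linf. \<forall>c::real.
        in_CX \<rho> (T a)
      \<and> cesaro_norm \<rho> (T a) = ennreal (SUP n. \<bar>a n\<bar>)
      \<and> (AE x in M0. T (\<lambda>n. a n + b n) x = T a x + T b x)
      \<and> (AE x in M0. T (\<lambda>n. c * a n) x = c * T a x)
      \<and> (AE x in M0. T (\<lambda>n. max (a n) (b n)) x = max (T a x) (T b x)))"

end

theory Submission
  imports Defs
begin

definition idx :: "real \<Rightarrow> nat" where "idx x = nat \<lfloor>sqrt (ln x)\<rfloor>"

definition Tm :: "real \<Rightarrow> (nat \<Rightarrow> real) \<Rightarrow> real \<Rightarrow> real" where
  "Tm s a x = (if 1 \<le> x then a (fst (prod_decode (idx x))) else 0) * s"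

definition Bset :: "nat \<Rightarrow> real \<Rightarrow> real set" where
  "Bset n q = (\<Union>k. {exp (real (prod_encode (n,k)) ^ 2) / (1 - q) <..< exp (real (prod_encode (n,k) + 1) ^ 2)})"

lemma idx_meas[measurable]: "idx \<in> measurable borel (count_space UNIV)"
  unfolding idx_def by measurable

lemma Tm_meas: "Tm s a \<in> Mfun"
proof -
  have "Tm s a \<in> borel_measurable borel"
    unfolding Tm_def
    by (rule measurable_compose_countable[where g=idx and f="\<lambda>i x. (if 1 \<le> x then a (fst (prod_decode i)) else 0) * s"]) auto
  then show ?thesis unfolding Mfun_def
    by (intro measurable_restrict_space1 measurable_completion) (simp add: measurable_lborel1)
qed

lemma ind_meas: "open B \<Longrightarrow> indicator B \<in> Mfun"
  unfolding Mfun_def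
  by (intro measurable_restrict_space1 measurable_completion) (auto simp: measurable_lborel1)

lemma const_meas: "(\<lambda>x. c) \<in> Mfun"
  unfolding Mfun_def by simp

lemma idx_eq: fixes m :: nat assumes "exp (real m ^ 2) < t" "t < exp (real (m+1) ^ 2)" shows "idx t = m"
proof -
  have t0: "t > 0" using assms(1) by (meson exp_gt_zero less_trans)
  have "real m ^ 2 < ln t" using assms(1) t0 by (metis ln_exp ln_less_cancel_iff exp_gt_zero)
  moreover have "ln t < real (m+1) ^ 2" using assms(2) t0 by (metis ln_exp ln_less_cancel_iff exp_gt_zero)
  ultimately have "real m < sqrt (ln t)" "sqrt (ln t) < real m + 1"
    using real_sqrt_less_mono[of "ln t" "real (m+1) ^ 2"] by (auto simp: real_less_rsqrt)
  then have "\<lfloor>sqrt (ln t)\<rfloor> = int m" by (simp add: floor_eq_iff)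
  then show ?thesis by (simp add: idx_def)
qed

lemma cint_upper:
  assumes "\<And>t. \<bar>f t\<bar> \<le> C" "x > 0"
  shows "cesaro_int f x \<le> ennreal (C * x)"
proof -
  have "cesaro_int f x \<le> (\<integral>\<^sup>+ t. ennreal C * indicator {0<..<x} t \<partial>lborel)"
    unfolding cesaro_int_def
    by (intro nn_integral_mono) (auto simp: assms indicator_def ennreal_leI)
  also have "\<dots> = ennreal C * ennreal x" using assms(2) by (simp add: nn_integral_cmult_indicator)
  also have "\<dots> = ennreal (C * x)"
    using assms(2) by (metis abs_ge_zero assms(1) ennreal_mult' order_trans mult.commute less_imp_le)
  finally show ?thesis .
qed

lemma cint_lower:
  assumes "\<And>t. t \<in> {c<..<x} \<Longrightarrow> D \<le> \<bar>f t\<bar>" "0 \<le> D" "0 \<le> c" "c \<le> x"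
  shows "ennreal (D * (x - c)) \<le> cesaro_int f x"
proof -
  have "ennreal (D * (x - c)) = ennreal D * ennreal (x - c)"
    using assms by (simp add: ennreal_mult)
  also have "\<dots> = (\<integral>\<^sup>+ t. ennreal D * indicator {c<..<x} t \<partial>lborel)"
    using assms by (simp add: nn_integral_cmult_indicator)
  also have "\<dots> \<le> cesaro_int f x"
    unfolding cesaro_int_def
    using assms(3) by (intro nn_integral_mono) (auto simp: assms(1,2) indicator_def ennreal_leI dest: order.strict_trans1[OF assms(3)])
  finally show ?thesis .
qed

lemma cesaro_abs_le:
  assumes "\<And>t. \<bar>f t\<bar> \<le> C"
  shows "\<bar>cesaro f x\<bar> \<le> C"
proof (cases "x > 0")
  case True
  have C0: "C \<ge> 0" using assms[of 0] by linarith
  have "enn2real (cesaro_int f x) \<le> enn2real (ennreal (C * x))"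
    using cint_upper[OF assms True] by (intro enn2real_mono) auto
  then have "enn2real (cesaro_int f x) \<le> C * x" using C0 True by simp
  then have "(1 / x) * enn2real (cesaro_int f x) \<le> C"
    using True by (simp add: field_simps)
  then show ?thesis using True by (simp add: cesaro_def)
next
  case False
  then show ?thesis using assms[of 0] by (simp add: cesaro_def)
qed

lemma Bset_open: "open (Bset n q)"
  unfolding Bset_def by (intro open_UN) auto

lemma open_sets_lebesgue: "open (B::real set) \<Longrightarrow> B \<in> sets lebesgue"
  by (metis borel_open sets_completionI_sets sets_lborel)

lemma Bset_pos: assumes "q < 1" shows "Bset n q \<subseteq> {0<..}"
proof
  fix x assume "x \<in> Bset n q"
  then obtain k where "exp (real (prod_encode (n,k)) ^ 2) / (1 - q) < x"
    unfolding Bset_def by auto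
  moreover have "0 < exp (real (prod_encode (n,k)) ^ 2) / (1 - q)" using assms by simp
  ultimately show "x \<in> {0<..}" by simp
qed

lemma Bset_prop:
  assumes "0 \<le> q" "q < 1" "x \<in> Bset n q"
  shows "\<exists>c. 1 \<le> c \<and> c \<le> (1 - q) * x \<and> c \<le> x \<and> (\<forall>t\<in>{c<..<x}. 1 \<le> t \<and> fst (prod_decode (idx t)) = n)"
proof -
  obtain k where k: "exp (real (prod_encode (n,k)) ^ 2) / (1 - q) < x" "x < exp (real (prod_encode (n,k) + 1) ^ 2)"
    using assms(3) unfolding Bset_def by auto
  define m where "m = prod_encode (n,k)"
  define c where "c = exp (real m ^ 2)"
  have c1: "1 \<le> c" unfolding c_def by simp
  have cq: "c < (1 - q) * x" using k(1) assms(2) unfolding c_def m_def by (simp add: field_simps)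
  have x0: "x > 0"
  proof (rule ccontr)
    assume "\<not> x > 0"
    then have "(1 - q) * x \<le> 0" using assms(2) by (intro mult_nonneg_nonpos) auto
    then show False using c1 cq by linarith
  qed
  have "(1 - q) * x \<le> x" using assms(1) x0 by (simp add: algebra_simps)
  then have cx: "c \<le> (1 - q) * x" "c \<le> x" using cq by auto
  have "\<forall>t\<in>{c<..<x}. 1 \<le> t \<and> fst (prod_decode (idx t)) = n"
  proof
    fix t assume t: "t \<in> {c<..<x}"
    have "idx t = m" using t k(2) unfolding c_def m_def by (intro idx_eq) auto
    then show "1 \<le> t \<and> fst (prod_decode (idx t)) = n" using t c1 unfolding m_def by auto
  qed
  then show ?thesis using c1 cx by blast
qed

lemma ennreal_all_le_infty: assumes "\<And>L. 0 \<le> L \<Longrightarrow> ennreal L \<le> e" shows "e = \<infinity>"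
proof (rule ccontr)
  assume "e \<noteq> \<infinity>"
  then obtain r where r: "0 \<le> r" "e = ennreal r" by (cases e) auto
  then have "ennreal (r + 1) \<le> ennreal r" using assms[of "r+1"] by simp
  then show False using r by (simp add: ennreal_le_iff)
qed

lemma Bset_inf: assumes "0 \<le> q" "q < 1" shows "emeasure M0 (Bset n q) = \<infinity>"
proof -
  have "emeasure M0 (Bset n q) = emeasure lebesgue (Bset n q)"
    using Bset_pos[OF assms(2)] by (intro emeasure_restrict_space) (auto intro: open_sets_lebesgue)
  also have "\<dots> = \<infinity>"
  proof (rule ennreal_all_le_infty)
    fix L :: real assume L: "0 \<le> L"
    define k where "k = nat \<lceil>L + 1 / (1 - q)\<rceil>"
    define m where "m = prod_encode (n,k)"
    define c where "c = exp (real m ^ 2)"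
    define E where "E = exp (2 * real m + 1)"
    have c1: "1 \<le> c" unfolding c_def by simp
    have d: "exp (real (m + 1) ^ 2) = c * E"
      unfolding c_def E_def by (simp add: power2_eq_square algebra_simps flip: exp_add)
    have "E \<ge> 2 * real m + 2" unfolding E_def using exp_ge_add_one_self[of "2 * real m + 1"] by simp
    moreover have "real m \<ge> real k" unfolding m_def using le_prod_encode_2 by simp
    moreover have "real k \<ge> L + 1 / (1 - q)" unfolding k_def by linarith
    ultimately have E: "E - 1 / (1 - q) \<ge> L" by linarith
    have "L \<le> E - 1 / (1 - q)" by (fact E)
    also have "\<dots> \<le> c * (E - 1 / (1 - q))" using mult_right_mono[of 1 c "E - 1 / (1 - q)"] c1 E L by simp
    also have "\<dots> = exp (real (m + 1) ^ 2) - c / (1 - q)" using d by (simp add: algebra_simps)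
    finally have len: "L \<le> exp (real (m + 1) ^ 2) - c / (1 - q)" .
    have "ennreal L \<le> emeasure lebesgue {c / (1 - q) <..< exp (real (m + 1) ^ 2)}"
      using len L by simp
    also have "\<dots> \<le> emeasure lebesgue (Bset n q)"
      by (intro emeasure_mono) (auto simp: Bset_def c_def m_def intro!: open_sets_lebesgue Bset_open[unfolded Bset_def])
    finally show "ennreal L \<le> emeasure lebesgue (Bset n q)" .
  qed
  finally show ?thesis .
qed

lemma Bsets: assumes "q < 1" shows "Bset n q \<in> sets M0"
proof -
  have "(indicator (Bset n q) :: real \<Rightarrow> real) \<in> borel_measurable M0" using ind_meas[OF Bset_open] unfolding Mfun_def .
  then have "Bset n q \<inter> space M0 \<in> sets M0" by (simp only: borel_measurable_indicator_iff)
  moreover have "Bset n q \<inter> space M0 = Bset n q" using Bset_pos[OF assms] by auto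
  ultimately show ?thesis by simp
qed

lemma M0_inf: "emeasure M0 {0<..} = \<infinity>"
proof -
  have "emeasure M0 (Bset 0 0) \<le> emeasure M0 {0<..}"
    by (intro emeasure_mono) (use Bset_pos[of 0 0] in auto)
  then show ?thesis using Bset_inf[of 0 0] by (simp add: top_unique)
qed

theorem proposition4p4:
  fixes \<rho> :: "(real \<Rightarrow> real) \<Rightarrow> ennreal"
  assumes "ri_space \<rho>"
    and "fatou_property \<rho>"
    and "Linf_embeds \<rho>"
    and "cesaro_bounded \<rho>"
    and "\<forall>f A. in_X \<rho> f \<and> A \<in> sets lebesgue \<and> A \<subseteq> {0<..} \<and> emeasure lebesgue A < \<infinity>
              \<longrightarrow> in_Xa \<rho> (\<lambda>x. f x * indicator A x)"
  shows "contains_lattice_isometric_linf \<rho>"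
proof -
  have mono: "\<And>f g. f \<in> Mfun \<Longrightarrow> g \<in> Mfun \<Longrightarrow> (\<And>x. \<bar>f x\<bar> \<le> \<bar>g x\<bar>) \<Longrightarrow> \<rho> f \<le> \<rho> g"
    using assms(1) unfolding ri_space_def by (meson AE_I2)
  have zero: "\<And>f. f \<in> Mfun \<Longrightarrow> \<rho> f = 0 \<longleftrightarrow> (AE x in M0. f x = 0)"
    using assms(1) unfolding ri_space_def by blast
  have hom: "\<And>f c. f \<in> Mfun \<Longrightarrow> \<rho> (\<lambda>x. c * f x) = ennreal \<bar>c\<bar> * \<rho> f"
    using assms(1) unfolding ri_space_def by blast
  have ri: "\<And>f g. f \<in> Mfun \<Longrightarrow> g \<in> Mfun \<Longrightarrow>
        (\<And>s::real. emeasure M0 {x\<in>{0<..}. s < \<bar>f x\<bar>} = emeasure M0 {x\<in>{0<..}. s < \<bar>g x\<bar>})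
        \<Longrightarrow> \<rho> f = \<rho> g"
    using assms(1) unfolding ri_space_def by blast
  have Linf: "\<And>f. f\<in>Mfun \<Longrightarrow> (\<exists>B. AE x in M0. \<bar>f x\<bar> \<le> B) \<Longrightarrow> \<rho> f < \<infinity>"
    using assms(3) unfolding Linf_embeds_def by blast
  have hom1: "\<rho> (\<lambda>x. c) = ennreal \<bar>c\<bar> * \<rho> (\<lambda>x. 1)" for c
  proof -
    have "\<rho> (\<lambda>x. c * 1) = ennreal \<bar>c\<bar> * \<rho> (\<lambda>x. 1)" by (rule hom[OF const_meas])
    then show ?thesis by simp
  qed
  have fin1: "\<rho> (\<lambda>x. 1) < \<infinity>"
    by (rule Linf[OF const_meas[of 1]]) (auto intro!: exI[of _ 1] AE_I2)
  have nz1: "\<rho> (\<lambda>x. 1) \<noteq> 0"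
  proof
    assume "\<rho> (\<lambda>x. 1) = 0"
    then have "AE x in M0. False" using zero[OF const_meas[of 1]] by simp
    then obtain N where N: "{x \<in> space M0. \<not> False} \<subseteq> N" "N \<in> sets M0" "emeasure M0 N = 0"
      by (auto elim: AE_E)
    then have "emeasure M0 {0<..} \<le> emeasure M0 N" by (intro emeasure_mono) auto
    then show False using N M0_inf by simp
  qed
  define r1 where "r1 = enn2real (\<rho> (\<lambda>x. 1))"
  have r1: "\<rho> (\<lambda>x. 1) = ennreal r1" "r1 > 0"
    using fin1 nz1 unfolding r1_def by (auto simp: enn2real_positive_iff less_top[symmetric] zero_less_iff_neq_zero)
  define s where "s = 1 / r1"
  have s0: "s > 0" using r1 by (simp add: s_def)
  have sr: "ennreal s * ennreal r1 = 1" using r1 s0 by (simp add: s_def flip: ennreal_mult)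
  have riB: "\<rho> (indicator (Bset n q)) = ennreal r1" if q: "0 \<le> q" "q < 1" for n q
  proof -
    have "\<rho> (indicator (Bset n q)) = \<rho> (\<lambda>x. 1)"
    proof (rule ri[OF ind_meas[OF Bset_open] const_meas])
      fix t :: real
      show "emeasure M0 {x\<in>{0<..}. t < \<bar>indicator (Bset n q) x\<bar>} = emeasure M0 {x\<in>{0<..}. t < \<bar>1::real\<bar>}"
      proof (cases "t < 0")
        case True
        then have "{x\<in>{0<..}. t < \<bar>indicator (Bset n q) x :: real\<bar>} = {x\<in>{0<..}. t < \<bar>1::real\<bar>}"
          by (auto simp: indicator_def)
        then show ?thesis by simp
      next
        case False
        show ?thesis
        proof (cases "t < 1")
          case True
          then have "{x\<in>{0<..}. t < \<bar>indicator (Bset n q) x :: real\<bar>} = Bset n q"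
            using False Bset_pos[OF q(2)] by (auto simp: indicator_def)
          moreover have "{x\<in>{0<..}. t < \<bar>1::real\<bar>} = {0<..}" using True by auto
          ultimately show ?thesis using Bset_inf[OF q, of n] M0_inf by metis
        next
          case False
          then have "{x\<in>{0<..}. t < \<bar>indicator (Bset n q) x :: real\<bar>} = {}"
            by (auto simp: indicator_def)
          moreover have "{x\<in>{0<..}. t < \<bar>1::real\<bar>} = {}" using False by auto
          ultimately show ?thesis by metis
        qed
      qed
    qed
    then show ?thesis using r1 by simp
  qed
  show ?thesis
    unfolding contains_lattice_isometric_linf_def
  proof (intro exI[of _ "Tm s"] ballI allI conjI)
    fix a b :: "nat \<Rightarrow> real" and c :: real
    assume a: "a \<in> linf" and b: "b \<in> linf"
    show "AE x in M0. Tm s (\<lambda>n. a n + b n) x = Tm s a x + Tm s b x"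
      by (intro AE_I2) (simp add: Tm_def algebra_simps)
    show "AE x in M0. Tm s (\<lambda>n. c * a n) x = c * Tm s a x"
      by (intro AE_I2) (simp add: Tm_def algebra_simps)
    show "AE x in M0. Tm s (\<lambda>n. max (a n) (b n)) x = max (Tm s a x) (Tm s b x)"
      using s0 by (intro AE_I2) (simp add: Tm_def max_mult_distrib_right)
    obtain B where B: "\<And>n. \<bar>a n\<bar> \<le> B" using a unfolding linf_def bounded_real by auto
    define M where "M = (SUP n. \<bar>a n\<bar>)"
    have bdd: "bdd_above (range (\<lambda>n. \<bar>a n\<bar>))" using B by (intro bdd_aboveI[of _ B]) auto
    have aM: "\<And>n. \<bar>a n\<bar> \<le> M" unfolding M_def using bdd by (intro cSUP_upper) auto
    have M0': "0 \<le> M" using aM[of 0] by linarith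
    define f where "f = Tm s a"
    have fb: "\<And>t. \<bar>f t\<bar> \<le> M * s"
      using aM s0 M0' by (auto simp: f_def Tm_def abs_mult intro: mult_right_mono)
    have fM: "f \<in> Mfun" unfolding f_def by (rule Tm_meas)
    have fX: "in_X \<rho> f"
    proof -
    have "\<exists>B. AE x in M0. \<bar>f x\<bar> \<le> B" using fb by (intro exI[of _ "M * s"] AE_I2) simp
    then show ?thesis using assms(3) fM unfolding Linf_embeds_def in_X_def by blast
  qed
    have cM: "cesaro f \<in> Mfun" using assms(4) fX unfolding cesaro_bounded_def by blast
    have cfin: "cesaro_finite f"
      unfolding cesaro_finite_def
    proof (intro allI impI)
      fix x :: real assume "x > 0"
      then have "cesaro_int f x \<le> ennreal (M * s * x)" by (rule cint_upper[OF fb])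
      then show "cesaro_int f x < \<infinity>" by (rule le_less_trans) simp
    qed
    have norm_eq: "cesaro_norm \<rho> f = \<rho> (cesaro f)" using cfin by (simp add: cesaro_norm_def)
    have up: "\<rho> (cesaro f) \<le> ennreal M"
    proof -
      have "\<rho> (cesaro f) \<le> \<rho> (\<lambda>x. M * s)"
      proof (rule mono[OF cM const_meas])
        fix x
        have "\<bar>cesaro f x\<bar> \<le> M * s" by (rule cesaro_abs_le) (rule fb)
        then show "\<bar>cesaro f x\<bar> \<le> \<bar>M * s\<bar>" by linarith
      qed
      also have "\<dots> = ennreal M * (ennreal s * ennreal r1)"
        using hom1[of "M * s"] r1 M0' s0 by (simp add: abs_mult ennreal_mult mult.assoc)
      also have "\<dots> = ennreal M" using sr by simp
      finally show ?thesis .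
    qed
    define R where "R = enn2real (\<rho> (cesaro f))"
    have R: "\<rho> (cesaro f) = ennreal R"
    proof -
      have "\<rho> (cesaro f) < \<infinity>" using up by (rule le_less_trans) simp
      then show ?thesis unfolding R_def by simp
    qed
    have R0: "R \<ge> 0" unfolding R_def by simp
    have low: "ennreal (q * \<bar>a n\<bar>) \<le> \<rho> (cesaro f)" if q: "0 \<le> q" "q < 1" for q n
    proof -
      define h where "h = (\<lambda>x. (q * \<bar>a n\<bar> * s) * indicator (Bset n q) x :: real)"
      have hM: "h \<in> Mfun" using ind_meas[OF Bset_open, of n q] unfolding h_def Mfun_def by (intro borel_measurable_times) auto
      have "\<rho> h = ennreal (q * \<bar>a n\<bar> * s) * ennreal r1"
        unfolding h_def using hom[OF ind_meas[OF Bset_open]] riB[OF q] q s0 by simp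
      also have "\<dots> = ennreal (q * \<bar>a n\<bar>) * (ennreal s * ennreal r1)"
        using q s0 by (simp add: ennreal_mult mult.assoc)
      also have "\<dots> = ennreal (q * \<bar>a n\<bar>)" using sr by simp
      finally have rh: "\<rho> h = ennreal (q * \<bar>a n\<bar>)" .
      have "\<rho> h \<le> \<rho> (cesaro f)"
      proof (rule mono[OF hM cM])
        fix x
        show "\<bar>h x\<bar> \<le> \<bar>cesaro f x\<bar>"
        proof (cases "x \<in> Bset n q")
          case False
          then show ?thesis by (simp add: h_def)
        next
          case True
          then obtain c where c: "1 \<le> c" "c \<le> (1 - q) * x" "c \<le> x"
            "\<And>t. t\<in>{c<..<x} \<Longrightarrow> 1 \<le> t \<and> fst (prod_decode (idx t)) = n"
            using Bset_prop[OF q] by blast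
          have x0: "x > 0" using c by linarith
          have ft: "\<And>t. t\<in>{c<..<x} \<Longrightarrow> \<bar>a n\<bar> * s \<le> \<bar>f t\<bar>"
            using c(4) s0 by (auto simp: f_def Tm_def abs_mult)
          have "ennreal (\<bar>a n\<bar> * s * (x - c)) \<le> cesaro_int f x"
            using c s0 by (intro cint_lower ft) auto
          moreover have "cesaro_int f x < \<infinity>" using cfin x0 unfolding cesaro_finite_def by auto
          ultimately have "enn2real (ennreal (\<bar>a n\<bar> * s * (x - c))) \<le> enn2real (cesaro_int f x)"
            by (intro enn2real_mono) auto
          then have I: "\<bar>a n\<bar> * s * (x - c) \<le> enn2real (cesaro_int f x)"
            using c s0 by simp
          have "q * \<bar>a n\<bar> * s * x \<le> \<bar>a n\<bar> * s * (x - c)"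
          proof -
            have "q * x \<le> x - c" using c(2) by (simp add: algebra_simps)
            then have "(\<bar>a n\<bar> * s) * (q * x) \<le> (\<bar>a n\<bar> * s) * (x - c)"
              using s0 by (intro mult_left_mono) auto
            then show ?thesis by (simp add: algebra_simps)
          qed
          with I have "q * \<bar>a n\<bar> * s * x \<le> enn2real (cesaro_int f x)" by linarith
          then have "q * \<bar>a n\<bar> * s \<le> (1 / x) * enn2real (cesaro_int f x)"
            using x0 by (simp add: field_simps)
          then show ?thesis using True x0 q s0 by (simp add: h_def cesaro_def abs_mult)
        qed
      qed
      then show ?thesis using rh by simp
    qed
    have anR: "\<bar>a n\<bar> \<le> R" for n
    proof (rule ccontr)
      assume "\<not> \<bar>a n\<bar> \<le> R"
      then have lt: "R < \<bar>a n\<bar>" by simp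
      define q where "q = (R / \<bar>a n\<bar> + 1) / 2"
      have an0: "\<bar>a n\<bar> > 0" using lt R0 by linarith
      have "R / \<bar>a n\<bar> < 1" using lt an0 by (simp add: field_simps)
      then have q: "0 \<le> q" "q < 1" using R0 an0 by (auto simp: q_def)
      have "q * \<bar>a n\<bar> = (R + \<bar>a n\<bar>) / 2" using an0 by (simp add: q_def field_simps)
      then have "q * \<bar>a n\<bar> > R" using lt by simp
      moreover have "ennreal (q * \<bar>a n\<bar>) \<le> ennreal R" using low[OF q, of n] R by simp
      ultimately show False using R0 by (simp add: ennreal_le_iff)
    qed
    have "M \<le> R" unfolding M_def by (intro cSUP_least) (auto intro: anR)
    then have "ennreal M \<le> \<rho> (cesaro f)" using R by (simp add: ennreal_leI)
    with up have eq: "\<rho> (cesaro f) = ennreal M" by (rule order.antisym)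
    show "cesaro_norm \<rho> (Tm s a) = ennreal (SUP n. \<bar>a n\<bar>)"
      using norm_eq eq by (simp add: f_def M_def)
    show "in_CX \<rho> (Tm s a)"
      using norm_eq eq fM unfolding in_CX_def f_def by simp
  qed
qed

end
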